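(* Let $(H,L_H)$ be a right-resolving labeled graph presenting $Y=L_H(X_H)$, and let $C$ be a component of $H''$ such that $\beta_H(y)$ is backward asymptotic to $X_C$ for some $y\in Y$. Then $X_C \subseteq \overline{\beta_H(Y)}$ (closure in $X_{H''}$).
   Context: A labeled graph $(H,L_H)$: finite directed graph (vertices $V_H$, edges $E_H$, source/terminal maps $s_H,t_H$) without sinks or sources, labeling $L_H:E_H\to A$, edge shift $X_H$. Right-resolving: distinct edges with the same source have distinct labels. Subset construction $(H'',L_{H''})$: vertices are non-empty subsets of $V_H$; for vertices $F,F'$ and $a\in A$ there is an edge from $F$ to $F'$ labeled $a$ when $F\subseteq\{s_H(e): L_H(e)=a\}$ and $F'=\{t_H(e): s_H(e)\in F, L_H(e)=a\}$; the graph is then trimmed by repeatedly removing sinks and sources. For $y\in Y$ ($L_H^{-1}(y)$ is finite), $\beta_H(y)\in X_{H''}$ is the bi-infinite path whose $i$-th edge is the edge labeled $y_i$ from $F_i$ to $F_{i+1}$, where $F_i=\{s_H(k_i): k\in L_H^{-1}(y)\}$. Components: a vertex is recurrent if there is a path from it to itself; recurrent vertices are equivalent if each reaches the other by a path; an equivalence class $C$ is a component and $X_C$ is the edge shift of the subgraph with vertex set $C$ and edges with both endpoints in $C$. $x\in X_{H''}$ is backward asymptotic to $X_C$ if there exist $u\in X_C$ and $N$ with $x_i=u_i$ for all $i\le N$. *)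

theory Defs
  imports "HOL-Analysis.Analysis"
begin

definition finite_graph_no_sinks_sources ::
  "'v set \<Rightarrow> 'e set \<Rightarrow> ('e \<Rightarrow> 'v) \<Rightarrow> ('e \<Rightarrow> 'v) \<Rightarrow> bool" where
  "finite_graph_no_sinks_sources V E s t \<longleftrightarrow>
     finite V \<and> finite E \<and> (\<forall>e\<in>E. s e \<in> V \<and> t e \<in> V) \<and>
     (\<forall>v\<in>V. (\<exists>e\<in>E. s e = v) \<and> (\<exists>e\<in>E. t e = v))"

definition edge_shift :: "'e set \<Rightarrow> ('e \<Rightarrow> 'v) \<Rightarrow> ('e \<Rightarrow> 'v) \<Rightarrow> (int \<Rightarrow> 'e) set" where
  "edge_shift E s t = {x. \<forall>i. x i \<in> E \<and> t (x i) = s (x (i + 1))}"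

definition right_resolving :: "'e set \<Rightarrow> ('e \<Rightarrow> 'v) \<Rightarrow> ('e \<Rightarrow> 'a) \<Rightarrow> bool" where
  "right_resolving E s L \<longleftrightarrow> (\<forall>e\<in>E. \<forall>e'\<in>E. s e = s e' \<and> L e = L e' \<longrightarrow> e = e')"

definition label_shift ::
  "'e set \<Rightarrow> ('e \<Rightarrow> 'v) \<Rightarrow> ('e \<Rightarrow> 'v) \<Rightarrow> ('e \<Rightarrow> 'a) \<Rightarrow> (int \<Rightarrow> 'a) set" where
  "label_shift E s t L = (\<lambda>x. L \<circ> x) ` edge_shift E s t"

text \<open>Subset construction (before trimming).  An edge from F to F' labelled a is
  the triple (F, a, F').\<close>
definition ss_src :: "'v set \<times> 'a \<times> 'v set \<Rightarrow> 'v set" where "ss_src e = fst e"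
definition ss_lab :: "'v set \<times> 'a \<times> 'v set \<Rightarrow> 'a" where "ss_lab e = fst (snd e)"
definition ss_tgt :: "'v set \<times> 'a \<times> 'v set \<Rightarrow> 'v set" where "ss_tgt e = snd (snd e)"

definition subset_verts :: "'v set \<Rightarrow> 'v set set" where
  "subset_verts V = {F. F \<noteq> {} \<and> F \<subseteq> V}"

definition subset_edges ::
  "'v set \<Rightarrow> 'e set \<Rightarrow> ('e \<Rightarrow> 'v) \<Rightarrow> ('e \<Rightarrow> 'v) \<Rightarrow> ('e \<Rightarrow> 'a) \<Rightarrow> ('v set \<times> 'a \<times> 'v set) set" where
  "subset_edges V E s t L =
     {(F, a, F'). F \<in> subset_verts V \<and> F' \<in> subset_verts V \<and>
        F \<subseteq> {s e | e. e \<in> E \<and> L e = a} \<and>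
        F' = {t e | e. e \<in> E \<and> s e \<in> F \<and> L e = a}}"

definition trim_step ::
  "('e \<Rightarrow> 'v) \<Rightarrow> ('e \<Rightarrow> 'v) \<Rightarrow> 'v set \<times> 'e set \<Rightarrow> 'v set \<times> 'e set" where
  "trim_step s t G =
     (let W' = {v \<in> fst G. (\<exists>e\<in>snd G. s e = v) \<and> (\<exists>e\<in>snd G. t e = v)}
      in (W', {e \<in> snd G. s e \<in> W' \<and> t e \<in> W'}))"

definition trimmed ::
  "('e \<Rightarrow> 'v) \<Rightarrow> ('e \<Rightarrow> 'v) \<Rightarrow> 'v set \<Rightarrow> 'e set \<Rightarrow> 'v set \<times> 'e set" where
  "trimmed s t W D =
     ((\<Inter>n. fst ((trim_step s t ^^ n) (W, D))), (\<Inter>n. snd ((trim_step s t ^^ n) (W, D))))"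

definition H2_verts ::
  "'v set \<Rightarrow> 'e set \<Rightarrow> ('e \<Rightarrow> 'v) \<Rightarrow> ('e \<Rightarrow> 'v) \<Rightarrow> ('e \<Rightarrow> 'a) \<Rightarrow> 'v set set" where
  "H2_verts V E s t L = fst (trimmed ss_src ss_tgt (subset_verts V) (subset_edges V E s t L))"

definition H2_edges ::
  "'v set \<Rightarrow> 'e set \<Rightarrow> ('e \<Rightarrow> 'v) \<Rightarrow> ('e \<Rightarrow> 'v) \<Rightarrow> ('e \<Rightarrow> 'a) \<Rightarrow> ('v set \<times> 'a \<times> 'v set) set" where
  "H2_edges V E s t L = snd (trimmed ss_src ss_tgt (subset_verts V) (subset_edges V E s t L))"

definition beta_F ::
  "'e set \<Rightarrow> ('e \<Rightarrow> 'v) \<Rightarrow> ('e \<Rightarrow> 'v) \<Rightarrow> ('e \<Rightarrow> 'a) \<Rightarrow> (int \<Rightarrow> 'a) \<Rightarrow> int \<Rightarrow> 'v set" where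
  "beta_F E s t L y i = {s (k i) | k. k \<in> edge_shift E s t \<and> L \<circ> k = y}"

definition beta ::
  "'e set \<Rightarrow> ('e \<Rightarrow> 'v) \<Rightarrow> ('e \<Rightarrow> 'v) \<Rightarrow> ('e \<Rightarrow> 'a) \<Rightarrow> (int \<Rightarrow> 'a) \<Rightarrow> int \<Rightarrow> 'v set \<times> 'a \<times> 'v set" where
  "beta E s t L y = (\<lambda>i. (beta_F E s t L y i, y i, beta_F E s t L y (i + 1)))"

definition edge_rel :: "'e set \<Rightarrow> ('e \<Rightarrow> 'v) \<Rightarrow> ('e \<Rightarrow> 'v) \<Rightarrow> ('v \<times> 'v) set" where
  "edge_rel D s t = {(s e, t e) | e. e \<in> D}"

definition recurrent :: "'e set \<Rightarrow> ('e \<Rightarrow> 'v) \<Rightarrow> ('e \<Rightarrow> 'v) \<Rightarrow> 'v \<Rightarrow> bool" where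
  "recurrent D s t v \<longleftrightarrow> (v, v) \<in> (edge_rel D s t)\<^sup>+"

definition is_component :: "'e set \<Rightarrow> ('e \<Rightarrow> 'v) \<Rightarrow> ('e \<Rightarrow> 'v) \<Rightarrow> 'v set \<Rightarrow> bool" where
  "is_component D s t C \<longleftrightarrow>
     (\<exists>v. recurrent D s t v \<and>
        C = {w. recurrent D s t w \<and> (v, w) \<in> (edge_rel D s t)\<^sup>* \<and> (w, v) \<in> (edge_rel D s t)\<^sup>*})"

definition component_shift ::
  "'e set \<Rightarrow> ('e \<Rightarrow> 'v) \<Rightarrow> ('e \<Rightarrow> 'v) \<Rightarrow> 'v set \<Rightarrow> (int \<Rightarrow> 'e) set" where
  "component_shift D s t C = edge_shift {e \<in> D. s e \<in> C \<and> t e \<in> C} s t"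

definition backward_asymptotic :: "(int \<Rightarrow> 'e) \<Rightarrow> (int \<Rightarrow> 'e) set \<Rightarrow> bool" where
  "backward_asymptotic x X \<longleftrightarrow> (\<exists>u\<in>X. \<exists>N. \<forall>i\<le>N. x i = u i)"

definition shift_closure ::
  "'e set \<Rightarrow> ('e \<Rightarrow> 'v) \<Rightarrow> ('e \<Rightarrow> 'v) \<Rightarrow> (int \<Rightarrow> 'e) set \<Rightarrow> (int \<Rightarrow> 'e) set" where
  "shift_closure D s t S =
     (subtopology (product_topology (\<lambda>_. discrete_topology D) UNIV) (edge_shift D s t)) closure_of S"

end

theory Submission
  imports Defs
begin


definition wd :: "(int \<Rightarrow> 'a) \<Rightarrow> int \<Rightarrow> nat \<Rightarrow> 'a list" where
  "wd y a m = map (\<lambda>i. y (a + int i)) [0..<m]"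

lemma wd_Suc: "wd y a (Suc m) = wd y a m @ [y (a + int m)]"
  by (simp add: wd_def)

lemma wd_Suc_left: "wd y a (Suc m) = y a # wd y (a + 1) m"
  unfolding wd_def by (induction m) (auto simp: algebra_simps)

lemma length_wd[simp]: "length (wd y a m) = m" by (simp add: wd_def)

lemma nth_wd[simp]: "i < m \<Longrightarrow> wd y a m ! i = y (a + int i)" by (simp add: wd_def)

locale rrg =
  fixes V :: "'v set" and E :: "'e set" and s t :: "'e \<Rightarrow> 'v" and L :: "'e \<Rightarrow> 'a"
  assumes G: "finite_graph_no_sinks_sources V E s t"
    and RR: "right_resolving E s L"
begin

lemma finV: "finite V" and finE: "finite E" and stV: "e \<in> E \<Longrightarrow> s e \<in> V \<and> t e \<in> V"
  using G unfolding finite_graph_no_sinks_sources_def by auto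

lemma rr: "e \<in> E \<Longrightarrow> e' \<in> E \<Longrightarrow> s e = s e' \<Longrightarrow> L e = L e' \<Longrightarrow> e = e'"
  using RR unfolding right_resolving_def by blast

definition stp :: "'v set \<Rightarrow> 'a \<Rightarrow> 'v set" where
  "stp S a = {t e |e. e \<in> E \<and> s e \<in> S \<and> L e = a}"

definition stw :: "'v set \<Rightarrow> 'a list \<Rightarrow> 'v set" where
  "stw S w = foldl stp S w"

lemma stw_Nil[simp]: "stw S [] = S" and stw_Cons[simp]: "stw S (a # w) = stw (stp S a) w"
  and stw_append: "stw S (w1 @ w2) = stw (stw S w1) w2"
  by (simp_all add: stw_def)

lemma stw_snoc: "stw S (w @ [a]) = stp (stw S w) a"
  by (simp add: stw_append)

fun okw :: "'v set \<Rightarrow> 'a list \<Rightarrow> bool" where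
  "okw S [] = True"
| "okw S (a # w) = (S \<subseteq> {s e |e. e \<in> E \<and> L e = a} \<and> okw (stp S a) w)"

lemma okw_append: "okw S (w1 @ w2) = (okw S w1 \<and> okw (stw S w1) w2)"
  by (induction w1 arbitrary: S) auto

lemma stp_mono: "S \<subseteq> T \<Longrightarrow> stp S a \<subseteq> stp T a"
  unfolding stp_def by blast

lemma stw_mono: "S \<subseteq> T \<Longrightarrow> stw S w \<subseteq> stw T w"
proof (induction w arbitrary: S T)
  case (Cons a w)
  then show ?case using stp_mono[OF Cons.prems, of a] by simp
qed simp

lemma stp_V: "stp S a \<subseteq> V"
  unfolding stp_def using stV by blast

lemma stw_V: "S \<subseteq> V \<Longrightarrow> stw S w \<subseteq> V"
  by (induction w arbitrary: S) (auto intro: stp_V[THEN subsetD])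

lemma stw_union: "stw S w = {z. \<exists>x\<in>S. z \<in> stw {x} w}"
proof (induction w arbitrary: S)
  case Nil then show ?case by auto
next
  case (Cons a w)
  have e1: "stw S (a # w) = {z. \<exists>y\<in>stp S a. z \<in> stw {y} w}"
    using Cons.IH[of "stp S a"] by (simp only: stw_Cons)
  have e2: "z \<in> stw {x} (a # w) \<longleftrightarrow> (\<exists>y\<in>stp {x} a. z \<in> stw {y} w)" for x z
    using Cons.IH[of "stp {x} a"] by (simp only: stw_Cons mem_Collect_eq)
  show ?case unfolding e1 e2 unfolding stp_def by blast
qed

lemma stw_single_atmost: "\<forall>a\<in>S. \<forall>b\<in>S. a = b \<Longrightarrow> \<forall>a\<in>stw S w. \<forall>b\<in>stw S w. a = b"
proof (induction w arbitrary: S)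
  case Nil then show ?case by simp
next
  case (Cons c w)
  have "\<forall>a\<in>stp S c. \<forall>b\<in>stp S c. a = b"
    using Cons.prems unfolding stp_def by (auto dest: rr)
  then show ?case using Cons.IH by simp
qed

lemma stw_single_sub: "\<exists>z. stw {x} w \<subseteq> {z}"
proof -
  have "\<forall>a\<in>stw {x} w. \<forall>b\<in>stw {x} w. a = b"
    by (rule stw_single_atmost) simp
  then show ?thesis by (metis empty_subsetI insert_subsetI subsetI singletonI)
qed

lemma stw_mem: "z \<in> stw S w \<longleftrightarrow> (\<exists>x\<in>S. z \<in> stw {x} w)"
  by (subst stw_union) simp

lemma fin_single: "finite (stw {x} w)"
proof -
  obtain z where "stw {x} w \<subseteq> {z}" using stw_single_sub by blast
  then show ?thesis by (rule finite_subset) simp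
qed

lemma card_single: "card (stw {x} w) \<le> 1"
proof -
  obtain z where "stw {x} w \<subseteq> {z}" using stw_single_sub by blast
  then have "card (stw {x} w) \<le> card {z}" by (rule card_mono[rotated]) simp
  then show ?thesis by simp
qed

lemma stw_UN: "stw S w = (\<Union>x\<in>S. stw {x} w)"
  using stw_mem[of _ S w] by auto

lemma finite_stw: "finite S \<Longrightarrow> finite (stw S w)"
  unfolding stw_UN[of S w] using fin_single by simp

lemma card_stw_le: "finite S \<Longrightarrow> card (stw S w) \<le> card S"
proof -
  assume fS: "finite S"
  have "card (stw S w) \<le> (\<Sum>x\<in>S. card (stw {x} w))"
    unfolding stw_UN[of S w] by (rule card_UN_le[OF fS])
  also have "\<dots> \<le> (\<Sum>x\<in>S. 1)" by (rule sum_mono) (rule card_single)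
  finally show ?thesis by simp
qed

lemma card_stw_less:
  assumes fS: "finite S" and x: "x \<in> S" and f: "f \<in> S" and ne: "x \<noteq> f"
    and sub: "stw {x} w \<subseteq> stw {f} w"
  shows "card (stw S w) < card S"
proof -
  have "stw S w \<subseteq> stw (S - {x}) w"
  proof
    fix z assume "z \<in> stw S w"
    then obtain x' where x': "x' \<in> S" "z \<in> stw {x'} w" unfolding stw_mem[of z S w] by blast
    show "z \<in> stw (S - {x}) w"
    proof (cases "x' = x")
      case True
      then have "z \<in> stw {f} w" using x' sub by auto
      moreover have "f \<in> S - {x}" using f ne by auto
      ultimately show ?thesis unfolding stw_mem[of z "S - {x}" w] by blast
    next
      case False
      then have "x' \<in> S - {x}" using x' by auto
      then show ?thesis using x'(2) unfolding stw_mem[of z "S - {x}" w] by blast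
    qed
  qed
  then have "card (stw S w) \<le> card (stw (S - {x}) w)"
    using fS finite_stw[of "S - {x}" w] by (intro card_mono) auto
  also have "\<dots> \<le> card (S - {x})" using fS card_stw_le by auto
  also have "\<dots> < card S" using fS x by (meson card_Diff1_less)
  finally show ?thesis .
qed

definition walk :: "'v \<Rightarrow> (nat \<Rightarrow> 'e) \<Rightarrow> nat \<Rightarrow> 'v \<Rightarrow> bool" where
  "walk x h n z \<longleftrightarrow> (\<forall>m<n. h m \<in> E \<and> (Suc m < n \<longrightarrow> t (h m) = s (h (Suc m)))) \<and>
     (n = 0 \<longrightarrow> z = x) \<and> (n > 0 \<longrightarrow> s (h 0) = x \<and> t (h (n - 1)) = z)"

lemma okw_walk:
  assumes "okw S w" "x \<in> S"
  shows "\<exists>h z. walk x h (length w) z \<and> (\<forall>m<length w. L (h m) = w ! m) \<and> z \<in> stw {x} w"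
  using assms
proof (induction w arbitrary: S x)
  case Nil
  then show ?case unfolding walk_def by (intro exI[of _ "\<lambda>_. undefined"] exI[of _ x]) simp
next
  case (Cons a w)
  have ok1: "S \<subseteq> {s e |e. e \<in> E \<and> L e = a}" and ok2: "okw (stp S a) w"
    using Cons.prems(1) by simp_all
  obtain e where e: "e \<in> E" "s e = x" "L e = a" using ok1 Cons.prems(2) by blast
  have te: "t e \<in> stp S a" using e Cons.prems(2) unfolding stp_def by blast
  obtain h z where h: "walk (t e) h (length w) z" "\<forall>m<length w. L (h m) = w ! m"
    "z \<in> stw {t e} w" using Cons.IH[OF ok2 te] by blast
  define h' where "h' = (\<lambda>m. if m = 0 then e else h (m - 1))"
  have W1: "walk x h' (length (a # w)) z"
  proof -
    have A: "\<forall>m<length w. h m \<in> E \<and> (Suc m < length w \<longrightarrow> t (h m) = s (h (Suc m)))"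
      and B: "length w = 0 \<longrightarrow> z = t e"
      and C: "length w > 0 \<longrightarrow> s (h 0) = t e \<and> t (h (length w - 1)) = z"
      using h(1) unfolding walk_def by blast+
    show ?thesis unfolding walk_def
    proof (intro conjI allI impI)
      fix m assume m: "m < length (a # w)"
      show "h' m \<in> E" using m A e by (cases m) (auto simp: h'_def)
      show "Suc m < length (a # w) \<Longrightarrow> t (h' m) = s (h' (Suc m))"
        using A C e by (cases m) (auto simp: h'_def)
    next
      show "length (a # w) = 0 \<Longrightarrow> z = x" by simp
      show "s (h' 0) = x" using e by (simp add: h'_def)
      show "t (h' (length (a # w) - 1)) = z"
        using B C by (cases w) (auto simp: h'_def)
    qed
  qed
  have W2: "\<forall>m<length (a#w). L (h' m) = (a # w) ! m"
    using h(2) e by (auto simp: h'_def nth_Cons')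
  have W3: "z \<in> stw {x} (a # w)"
  proof -
    have "{t e} \<subseteq> stp {x} a" using e unfolding stp_def by blast
    then show ?thesis using h(3) stw_mono[of "{t e}" "stp {x} a" w] by auto
  qed
  show ?case using W1 W2 W3 by (intro exI[of _ h'] exI[of _ z]) simp
qed

end


lemma trim_keep:
  assumes z: "z \<in> edge_shift D src tgt" and W: "\<forall>i. src (z i) \<in> W"
  shows "z i \<in> snd (trimmed src tgt W D)"
proof -
  have zi: "z i \<in> D" "tgt (z i) = src (z (i + 1))" for i using z unfolding edge_shift_def by auto
  have "\<forall>i. z i \<in> snd ((trim_step src tgt ^^ n) (W, D)) \<and> src (z i) \<in> fst ((trim_step src tgt ^^ n) (W, D))" for n
  proof (induction n)
    case 0
    then show ?case using zi W by simp
  next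
    case (Suc n)
    define G where "G = (trim_step src tgt ^^ n) (W, D)"
    have IH: "z i \<in> snd G" "src (z i) \<in> fst G" for i using Suc unfolding G_def by auto
    define W' where "W' = {v \<in> fst G. (\<exists>e\<in>snd G. src e = v) \<and> (\<exists>e\<in>snd G. tgt e = v)}"
    have tsG: "trim_step src tgt G = (W', {e \<in> snd G. src e \<in> W' \<and> tgt e \<in> W'})"
      unfolding trim_step_def W'_def Let_def by simp
    have inW': "src (z i) \<in> W'" for i
    proof -
      have "tgt (z (i - 1)) = src (z i)" using zi(2)[of "i - 1"] by simp
      then show ?thesis unfolding W'_def using IH[of i] IH[of "i - 1"] by blast
    qed
    have "z i \<in> snd (trim_step src tgt G) \<and> src (z i) \<in> fst (trim_step src tgt G)" for i
      unfolding tsG using inW'[of i] inW'[of "i + 1"] IH[of i] zi(2)[of i] by simp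
    then show ?case unfolding G_def by simp
  qed
  then show ?thesis unfolding trimmed_def by simp
qed

lemma trimmed_sub: "snd (trimmed src tgt W D) \<subseteq> D"
  unfolding trimmed_def using INT_lower[of 0 UNIV "\<lambda>n. snd ((trim_step src tgt ^^ n) (W, D))"] by simp

lemma es_iff: "x \<in> edge_shift E s t \<longleftrightarrow> (\<forall>i. x i \<in> E \<and> t (x i) = s (x (i + 1)))"
  by (simp add: edge_shift_def)

context rrg
begin

lemma es_path:
  assumes "x \<in> edge_shift E s t"
  shows "s (x (i + int m)) \<in> stw {s (x i)} (wd (L \<circ> x) i m)"
proof (induction m)
  case 0 then show ?case by (simp add: wd_def)
next
  case (Suc m)
  have e: "x (i + int m) \<in> E" and te: "t (x (i + int m)) = s (x (i + int m + 1))"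
    using assms unfolding es_iff by auto
  have eq: "s (x (i + int (Suc m))) = t (x (i + int m))" using te by (simp add: algebra_simps)
  have "s (x (i + int (Suc m))) \<in> stp (stw {s (x i)} (wd (L \<circ> x) i m)) ((L \<circ> x) (i + int m))"
    unfolding stp_def eq comp_def using e Suc[unfolded comp_def] by auto
  then show ?case by (simp add: wd_Suc stw_snoc comp_def)
qed

lemma glue:
  assumes l1: "\<forall>i<a. l i \<in> E" and l2: "\<forall>i. i + 1 < a \<longrightarrow> t (l i) = s (l (i + 1))"
    and l3: "t (l (a - 1)) = x"
    and h: "walk x h n z"
    and r1: "\<forall>i\<ge>b. r i \<in> E \<and> t (r i) = s (r (i + 1))" and r2: "s (r b) = z"
  shows "(\<lambda>i. if i < c then l (i - c + a) else if i < c + int n then h (nat (i - c))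
            else r (i - c - int n + b)) \<in> edge_shift E s t" (is "?K \<in> _")
  unfolding es_iff
proof
  fix i
  have h1: "\<forall>m<n. h m \<in> E \<and> (Suc m < n \<longrightarrow> t (h m) = s (h (Suc m)))"
    and h2: "n = 0 \<longrightarrow> z = x" and h3: "n > 0 \<longrightarrow> s (h 0) = x \<and> t (h (n - 1)) = z"
    using h unfolding walk_def by blast+
  show "?K i \<in> E \<and> t (?K i) = s (?K (i + 1))"
  proof (cases "i < c - 1")
    case True
    then show ?thesis using l1 l2[rule_format, of "i - c + a"] by (auto simp: algebra_simps)
  next
    case F1: False
    show ?thesis
    proof (cases "i = c - 1")
      case True
      show ?thesis
      proof (cases "n = 0")
        case True
        then show ?thesis using \<open>i = c - 1\<close> l1 l3 h2 r2 by (auto simp: algebra_simps)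
      next
        case False
        then show ?thesis using \<open>i = c - 1\<close> l1 l3 h3 by (auto simp: algebra_simps)
      qed
    next
      case F2: False
      show ?thesis
      proof (cases "i < c + int n - 1")
        case True
        define m where "m = nat (i - c)"
        have im: "i = c + int m" "Suc m < n" using True F1 F2 unfolding m_def by auto
        have "nat (i + 1 - c) = Suc m" using im by auto
        then show ?thesis using h1 im by auto
      next
        case F3: False
        show ?thesis
        proof (cases "i = c + int n - 1")
          case True
          then have "n > 0" using F1 F2 by auto
          then have "nat (i - c) = n - 1" using True by auto
          then show ?thesis using True h1 h3 r2 \<open>n > 0\<close> r1 by auto
        next
          case False
          then have "i \<ge> c + int n" using F1 F2 F3 by auto
          then show ?thesis using r1[rule_format, of "i - c - int n + b"] by (auto simp: algebra_simps)
        qed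
      qed
    qed
  qed
qed

end


context rrg
begin

definition Dk :: "(int \<Rightarrow> 'a) \<Rightarrow> int \<Rightarrow> nat \<Rightarrow> 'v set" where
  "Dk y j k = stw V (wd y (j - int k) k)"

lemma Dk_Suc: "Dk y (j + 1) (Suc k) = stp (Dk y j k) (y j)"
proof -
  have "wd y (j + 1 - int (Suc k)) (Suc k) = wd y (j - int k) k @ [y j]"
    by (simp add: wd_Suc)
  then show ?thesis unfolding Dk_def by (simp add: stw_snoc)
qed

lemma Dk_anti: "Dk y j (Suc k) \<subseteq> Dk y j k"
proof -
  have "wd y (j - int (Suc k)) (Suc k) = y (j - int (Suc k)) # wd y (j - int k) k"
    using wd_Suc_left[of y "j - int (Suc k)" k] by simp
  then have "Dk y j (Suc k) = stw (stp V (y (j - int (Suc k)))) (wd y (j - int k) k)"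
    unfolding Dk_def by simp
  also have "\<dots> \<subseteq> Dk y j k" unfolding Dk_def by (rule stw_mono[OF stp_V])
  finally show ?thesis .
qed

lemma Dk_mono: "k \<le> k' \<Longrightarrow> Dk y j k' \<subseteq> Dk y j k"
  by (rule lift_Suc_antimono_le[of "Dk y j"]) (use Dk_anti in auto)

lemma Dk_fin: "finite (Dk y j k)"
  unfolding Dk_def using finite_stw finV by blast

lemma konig_step:
  assumes x: "\<forall>k. x \<in> Dk y (j + 1) k"
  shows "\<exists>e\<in>E. L e = y j \<and> t e = x \<and> (\<forall>k. s e \<in> Dk y j k)"
proof (rule ccontr)
  assume no: "\<not> ?thesis"
  define Ex where "Ex = {e\<in>E. L e = y j \<and> t e = x}"
  have finEx: "finite Ex" unfolding Ex_def using finE by simp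
  have ex: "\<exists>e\<in>Ex. s e \<in> Dk y j k" for k
  proof -
    have "x \<in> stp (Dk y j k) (y j)" using x Dk_Suc[of y j k] by metis
    then show ?thesis unfolding stp_def Ex_def by blast
  qed
  have "\<forall>e\<in>Ex. \<exists>k. s e \<notin> Dk y j k" using no unfolding Ex_def by blast
  then obtain f where f: "\<forall>e\<in>Ex. s e \<notin> Dk y j (f e)" by metis
  obtain e where e: "e \<in> Ex" "s e \<in> Dk y j (Max (f ` Ex))" using ex by blast
  have "f e \<le> Max (f ` Ex)" using e(1) finEx by simp
  then have "s e \<in> Dk y j (f e)" using Dk_mono e(2) by blast
  then show False using f e(1) by blast
qed

lemma konig_path:
  assumes x: "\<forall>k. x \<in> Dk y j k"
  shows "\<exists>lp. (\<forall>i<j. lp i \<in> E \<and> L (lp i) = y i) \<and> (\<forall>i. i + 1 < j \<longrightarrow> t (lp i) = s (lp (i + 1)))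
           \<and> t (lp (j - 1)) = x"
proof -
  define Pe where "Pe = (\<lambda>(m::nat) v e. e \<in> E \<and> L e = y (j - int m - 1) \<and> t e = v \<and>
                             (\<forall>k. s e \<in> Dk y (j - int m - 1) k))"
  define nxt where "nxt = (\<lambda>m v. SOME e. Pe m v e)"
  define vx where "vx = rec_nat x (\<lambda>m v. s (nxt m v))"
  have vx0: "vx 0 = x" and vxS: "vx (Suc m) = s (nxt m (vx m))" for m
    unfolding vx_def by simp_all
  have inv: "(\<forall>k. vx m \<in> Dk y (j - int m) k) \<and> Pe m (vx m) (nxt m (vx m))" for m
  proof (induction m)
    case 0
    have "\<exists>e. Pe 0 x e"
      using konig_step[of x y "j - 1"] x unfolding Pe_def by auto
    then show ?case using x vx0 unfolding nxt_def by (auto intro: someI_ex)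
  next
    case (Suc m)
    have eqj: "j - int (Suc m) = j - int m - 1" "j - int (Suc m) - 1 = j - int m - 2"
      "j - int m - 2 + 1 = j - int m - 1" by simp_all
    have A0: "\<forall>k. vx (Suc m) \<in> Dk y (j - int m - 1) k"
      using Suc vxS[of m] unfolding Pe_def by auto
    then have A: "\<forall>k. vx (Suc m) \<in> Dk y (j - int (Suc m)) k" unfolding eqj .
    have "\<exists>e\<in>E. L e = y (j - int m - 2) \<and> t e = vx (Suc m) \<and> (\<forall>k. s e \<in> Dk y (j - int m - 2) k)"
      using konig_step[of "vx (Suc m)" y "j - int m - 2"] A0 unfolding eqj by simp
    then have "\<exists>e. Pe (Suc m) (vx (Suc m)) e"
      unfolding Pe_def eqj by auto
    then show ?case using A unfolding nxt_def by (auto intro: someI_ex)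
  qed
  define lp where "lp = (\<lambda>i. nxt (nat (j - 1 - i)) (vx (nat (j - 1 - i))))"
  have P1: "lp i \<in> E \<and> L (lp i) = y i \<and> t (lp i) = vx (nat (j - 1 - i))" if "i < j" for i
  proof -
    have "Pe (nat (j - 1 - i)) (vx (nat (j - 1 - i))) (lp i)" using inv unfolding lp_def by blast
    moreover have "j - int (nat (j - 1 - i)) - 1 = i" using that by simp
    ultimately show ?thesis unfolding Pe_def by simp
  qed
  have P2: "t (lp i) = s (lp (i + 1))" if "i + 1 < j" for i
  proof -
    have "nat (j - 1 - i) = Suc (nat (j - 1 - (i + 1)))" using that by simp
    then have "vx (nat (j - 1 - i)) = s (lp (i + 1))" unfolding lp_def using vxS by simp
    then show ?thesis using P1[of i] that by simp
  qed
  have P3: "t (lp (j - 1)) = x" using P1[of "j - 1"] vx0 by simp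
  show ?thesis using P1 P2 P3 by blast
qed

lemma Dk_stab: "\<exists>k0. \<forall>k. Dk y j k0 \<subseteq> Dk y j k"
proof -
  obtain k0 where k0: "\<forall>m. card (Dk y j k0) \<le> card (Dk y j m)"
    using ex_has_least_nat[of "\<lambda>_. True" 0 "\<lambda>k. card (Dk y j k)"] by blast
  have "Dk y j k0 \<subseteq> Dk y j k" for k
  proof (cases "k \<le> k0")
    case True then show ?thesis by (rule Dk_mono)
  next
    case False
    then have sub: "Dk y j k \<subseteq> Dk y j k0" by (intro Dk_mono) simp
    moreover have "card (Dk y j k) \<le> card (Dk y j k0)" using sub Dk_fin by (rule card_mono[rotated])
    ultimately have "Dk y j k = Dk y j k0" using k0 Dk_fin
      by (intro card_subset_eq) (auto intro: le_antisym)
    then show ?thesis by simp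
  qed
  then show ?thesis by blast
qed

end


context rrg
begin

lemma bF_mem: "z \<in> beta_F E s t L y i \<longleftrightarrow> (\<exists>k. k \<in> edge_shift E s t \<and> L \<circ> k = y \<and> z = s (k i))"
  unfolding beta_F_def by blast

lemma bF_step: "beta_F E s t L y (i + 1) = stp (beta_F E s t L y i) (y i)"
proof
  show "beta_F E s t L y (i + 1) \<subseteq> stp (beta_F E s t L y i) (y i)"
  proof
    fix z assume "z \<in> beta_F E s t L y (i + 1)"
    then obtain k where k: "k \<in> edge_shift E s t" "L \<circ> k = y" "z = s (k (i + 1))"
      unfolding bF_mem by blast
    have "k i \<in> E" "t (k i) = s (k (i + 1))" using k(1) unfolding es_iff by auto
    moreover have "s (k i) \<in> beta_F E s t L y i" using k unfolding bF_mem by blast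
    moreover have "L (k i) = y i" using k(2) by auto
    ultimately show "z \<in> stp (beta_F E s t L y i) (y i)" unfolding stp_def using k(3)
      by (intro CollectI exI[of _ "k i"]) simp
  qed
next
  show "stp (beta_F E s t L y i) (y i) \<subseteq> beta_F E s t L y (i + 1)"
  proof
    fix z assume "z \<in> stp (beta_F E s t L y i) (y i)"
    then obtain e where e: "e \<in> E" "s e \<in> beta_F E s t L y i" "L e = y i" "z = t e"
      unfolding stp_def by blast
    then obtain k where k: "k \<in> edge_shift E s t" "L \<circ> k = y" "s e = s (k i)"
      unfolding bF_mem by blast
    have ki: "k i \<in> E" "t (k i) = s (k (i + 1))" using k(1) unfolding es_iff by auto
    have "L (k i) = y i" using k(2) by auto
    then have "e = k i" using rr[OF e(1) ki(1)] e(3) k(3) by simp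
    then show "z \<in> beta_F E s t L y (i + 1)" using e(4) ki k unfolding bF_mem by auto
  qed
qed

lemma bF_sub: "beta_F E s t L y i \<subseteq> {s e |e. e \<in> E \<and> L e = y i}"
proof
  fix z assume "z \<in> beta_F E s t L y i"
  then obtain k where k: "k \<in> edge_shift E s t" "L \<circ> k = y" "z = s (k i)"
    unfolding bF_mem by blast
  have "k i \<in> E" using k(1) unfolding es_iff by auto
  moreover have "L (k i) = y i" using k(2) by auto
  ultimately show "z \<in> {s e |e. e \<in> E \<and> L e = y i}" using k(3) by blast
qed

lemma bF_V: "beta_F E s t L y i \<subseteq> V"
  using bF_sub stV by blast

lemma bF_ne: "y \<in> label_shift E s t L \<Longrightarrow> beta_F E s t L y i \<noteq> {}"
  unfolding label_shift_def bF_mem[symmetric] using bF_mem by blast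

lemma beta_se: "y \<in> label_shift E s t L \<Longrightarrow> beta E s t L y i \<in> subset_edges V E s t L"
  unfolding beta_def subset_edges_def subset_verts_def
  using bF_ne[of y i] bF_ne[of y "i + 1"] bF_V[of y i] bF_V[of y "i + 1"] bF_sub[of y i]
    bF_step[of y i] unfolding stp_def by auto

lemma beta_es_se: "y \<in> label_shift E s t L \<Longrightarrow> beta E s t L y \<in> edge_shift (subset_edges V E s t L) ss_src ss_tgt"
  unfolding edge_shift_def using beta_se by (auto simp: beta_def ss_src_def ss_tgt_def)

lemma beta_H2: "y \<in> label_shift E s t L \<Longrightarrow> beta E s t L y \<in> edge_shift (H2_edges V E s t L) ss_src ss_tgt"
proof -
  assume y: "y \<in> label_shift E s t L"
  have "\<forall>i. ss_src (beta E s t L y i) \<in> subset_verts V"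
    using bF_ne[OF y] bF_V unfolding subset_verts_def by (auto simp: beta_def ss_src_def)
  then have "beta E s t L y i \<in> H2_edges V E s t L" for i
    unfolding H2_edges_def using trim_keep[OF beta_es_se[OF y]] by blast
  then show ?thesis using beta_es_se[OF y] unfolding edge_shift_def by auto
qed

lemma H2_sub: "H2_edges V E s t L \<subseteq> subset_edges V E s t L"
  unfolding H2_edges_def by (rule trimmed_sub)

lemma se_props:
  assumes "e \<in> subset_edges V E s t L"
  shows "ss_src e \<subseteq> {s e' |e'. e' \<in> E \<and> L e' = ss_lab e}"
    "ss_tgt e = stp (ss_src e) (ss_lab e)" "ss_src e \<in> subset_verts V" "ss_tgt e \<in> subset_verts V"
  using assms unfolding subset_edges_def stp_def
  by (auto simp: ss_src_def ss_tgt_def ss_lab_def)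

lemma sp_path:
  assumes z: "z \<in> edge_shift D ss_src ss_tgt" and D: "D \<subseteq> subset_edges V E s t L"
  shows "okw (ss_src (z i)) (wd (ss_lab \<circ> z) i m) \<and>
         stw (ss_src (z i)) (wd (ss_lab \<circ> z) i m) = ss_src (z (i + int m))"
proof (induction m)
  case 0 then show ?case by (simp add: wd_def)
next
  case (Suc m)
  have e: "z (i + int m) \<in> subset_edges V E s t L" and te: "ss_tgt (z (i + int m)) = ss_src (z (i + int m + 1))"
    using z D unfolding edge_shift_def by auto
  note P = se_props[OF e]
  have "okw (ss_src (z i)) (wd (ss_lab \<circ> z) i (Suc m))"
    using Suc P(1) unfolding wd_Suc okw_append by (simp add: comp_def)
  moreover have "stw (ss_src (z i)) (wd (ss_lab \<circ> z) i (Suc m)) = ss_src (z (i + int (Suc m)))"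
    using Suc P(2) te unfolding wd_Suc stw_snoc by (simp add: algebra_simps comp_def)
  ultimately show ?case by blast
qed

lemma rt_path:
  assumes "(a, b) \<in> (edge_rel (H2_edges V E s t L) ss_src ss_tgt)\<^sup>*"
  shows "\<exists>w. okw a w \<and> stw a w = b"
  using assms
proof (induction rule: rtrancl_induct)
  case base
  then show ?case by (intro exI[of _ "[]"]) simp
next
  case (step b c)
  then obtain w where w: "okw a w" "stw a w = b" by blast
  obtain e where e: "e \<in> H2_edges V E s t L" "b = ss_src e" "c = ss_tgt e"
    using step(2) unfolding edge_rel_def by blast
  note P = se_props[OF H2_sub[THEN subsetD, OF e(1)]]
  have "okw a (w @ [ss_lab e]) \<and> stw a (w @ [ss_lab e]) = c"
    unfolding okw_append stw_snoc using w e P(1,2) by simp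
  then show ?case by blast
qed

end


lemma closure_reduce:
  assumes w: "w \<in> edge_shift D src tgt"
    and S: "S \<subseteq> edge_shift D src tgt"
    and approx: "\<And>n::nat. \<exists>z\<in>S. \<forall>i. - int n \<le> i \<and> i \<le> int n \<longrightarrow> z i = w i"
  shows "w \<in> shift_closure D src tgt S"
  unfolding shift_closure_def in_closure_of
proof (intro conjI allI impI)
  show "w \<in> topspace (subtopology (product_topology (\<lambda>_. discrete_topology D) UNIV) (edge_shift D src tgt))"
    using w by (auto simp: edge_shift_def PiE_iff)
next
  fix T assume T: "w \<in> T \<and> openin (subtopology (product_topology (\<lambda>_. discrete_topology D) UNIV) (edge_shift D src tgt)) T"
  then obtain T' where T': "openin (product_topology (\<lambda>_. discrete_topology D) UNIV) T'"
    "T = T' \<inter> edge_shift D src tgt" unfolding openin_subtopology by blast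
  then have "w \<in> T'" using T by blast
  then obtain U where U: "finite {i \<in> UNIV. U i \<noteq> D}" "w \<in> Pi\<^sub>E UNIV U" "Pi\<^sub>E UNIV U \<subseteq> T'"
    using T'(1) unfolding openin_product_topology_alt by fastforce
  define J where "J = {i \<in> UNIV. U i \<noteq> D}"
  define n where "n = Max (insert 0 ((\<lambda>i. nat \<bar>i\<bar>) ` J))"
  have Jn: "i \<in> J \<Longrightarrow> nat \<bar>i\<bar> \<le> n" for i
    unfolding n_def using U(1) unfolding J_def[symmetric] by (intro Max_ge) auto
  obtain z where z: "z \<in> S" "\<forall>i. - int n \<le> i \<and> i \<le> int n \<longrightarrow> z i = w i" using approx by blast
  have zES: "z \<in> edge_shift D src tgt" using z(1) S by blast
  have "z \<in> Pi\<^sub>E UNIV U"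
  proof -
    have "z i \<in> U i" for i
    proof (cases "i \<in> J")
      case True
      then have "- int n \<le> i \<and> i \<le> int n" using Jn[of i] by auto
      then show ?thesis using z(2) U(2) by (auto simp: PiE_iff)
    next
      case False
      then show ?thesis using zES unfolding J_def edge_shift_def by auto
    qed
    then show ?thesis by (auto simp: PiE_iff)
  qed
  then have "z \<in> T" using U(3) T'(2) zES by blast
  then show "\<exists>y. y \<in> S \<and> y \<in> T" using z(1) by blast
qed



context rrg
begin

lemma bF_iter: "beta_F E s t L y (i + int m) = stw (beta_F E s t L y i) (wd y i m)"
proof (induction m)
  case 0 then show ?case by (simp add: wd_def)
next
  case (Suc m)
  have "beta_F E s t L y (i + int (Suc m)) = beta_F E s t L y ((i + int m) + 1)"
    by (simp add: algebra_simps)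
  also have "\<dots> = stp (beta_F E s t L y (i + int m)) (y (i + int m))" by (rule bF_step)
  also have "\<dots> = stw (beta_F E s t L y i) (wd y i (Suc m))" using Suc by (simp add: wd_Suc stw_snoc)
  finally show ?case .
qed

lemma beta_simps: "ss_src (beta E s t L y i) = beta_F E s t L y i" "ss_lab \<circ> beta E s t L y = y"
  "ss_lab (beta E s t L y i) = y i" "ss_tgt (beta E s t L y i) = beta_F E s t L y (i + 1)"
  by (auto simp: beta_def ss_src_def ss_lab_def ss_tgt_def)

lemma core:
  assumes y: "y \<in> label_shift E s t L"
    and Cpath: "\<And>a b. a \<in> C \<Longrightarrow> b \<in> C \<Longrightarrow> \<exists>w. okw a w \<and> stw a w = b"
    and FC: "\<And>i. i \<le> N \<Longrightarrow> beta_F E s t L y i \<in> C"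
    and w: "w \<in> edge_shift (H2_edges V E s t L) ss_src ss_tgt" and wC: "\<And>i. ss_src (w i) \<in> C"
  shows "\<exists>y'\<in>label_shift E s t L. \<forall>i. - int n \<le> i \<and> i \<le> int n \<longrightarrow> beta E s t L y' i = w i"
proof -
  define F where "F = beta_F E s t L y"
  obtain k0 where stab: "\<forall>k. Dk y N k0 \<subseteq> Dk y N k" using Dk_stab by blast
  define v where "v = wd y (N - int k0) k0"
  define D where "D = stw V v"
  have D_Dk: "D = Dk y N k0" unfolding D_def v_def Dk_def ..
  have KD: "s (g c) \<in> F N" if g: "g \<in> edge_shift E s t" and gl: "\<forall>i\<ge>c. L (g i) = y (i - c + N)"
    and gD: "s (g c) \<in> D" for g c
  proof -
    have "\<forall>k. s (g c) \<in> Dk y N k" using gD stab unfolding D_Dk by blast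
    then obtain lp where lp: "\<forall>i<N. lp i \<in> E \<and> L (lp i) = y i"
      "\<forall>i. i + 1 < N \<longrightarrow> t (lp i) = s (lp (i + 1))" "t (lp (N - 1)) = s (g c)"
      using konig_path by blast
    have wk: "walk (s (g c)) (\<lambda>_. undefined) 0 (s (g c))" unfolding walk_def by simp
    have r1: "\<forall>i\<ge>N. g (i - N + c) \<in> E \<and> t (g (i - N + c)) = s (g (i + 1 - N + c))"
      using g unfolding es_iff by (auto simp: algebra_simps)
    define K where "K = (\<lambda>i. if i < N then lp i else g (i - N + c))"
    have "(\<lambda>i. if i < N then lp (i - N + N) else if i < N + int 0 then (\<lambda>_. undefined) (nat (i - N))
            else (\<lambda>i. g (i - N + c)) (i - N - int 0 + N)) \<in> edge_shift E s t"
      by (rule glue[where a = N and b = N and x = "s (g c)" and z = "s (g c)"]) (use lp wk r1 in auto)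
    moreover have "(\<lambda>i. if i < N then lp (i - N + N) else if i < N + int 0 then (\<lambda>_. undefined) (nat (i - N))
            else (\<lambda>i. g (i - N + c)) (i - N - int 0 + N)) = K"
      unfolding K_def by auto
    ultimately have KE: "K \<in> edge_shift E s t" by simp
    have KL: "L \<circ> K = y"
    proof
      fix i show "(L \<circ> K) i = y i"
        using lp(1) gl[rule_format, of "i - N + c"] by (auto simp: K_def)
    qed
    have "s (K N) = s (g c)" by (simp add: K_def)
    then show ?thesis unfolding F_def bF_mem using KE KL by metis
  qed
  have FD: "F N \<subseteq> D"
  proof
    fix f assume "f \<in> F N"
    then obtain k where k: "k \<in> edge_shift E s t" "L \<circ> k = y" "f = s (k N)"
      unfolding F_def bF_mem by blast
    have "s (k (N - int k0 + int k0)) \<in> stw {s (k (N - int k0))} (wd (L \<circ> k) (N - int k0) k0)"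
      by (rule es_path[OF k(1)])
    then have "f \<in> stw {s (k (N - int k0))} v" using k unfolding v_def by simp
    moreover have "{s (k (N - int k0))} \<subseteq> V" using k(1) stV unfolding es_iff by blast
    ultimately show "f \<in> D" unfolding D_def using stw_mono by blast
  qed
  define GL where "GL = {\<rho>. okw (F N) \<rho> \<and> stw (F N) \<rho> = F N}"
  have "[] \<in> GL" unfolding GL_def by simp
  then obtain \<rho>0 where \<rho>0: "\<rho>0 \<in> GL" "\<forall>\<rho>\<in>GL. card (stw D \<rho>0) \<le> card (stw D \<rho>)"
    using ex_has_least_nat[of "\<lambda>\<rho>. \<rho> \<in> GL" "[]" "\<lambda>\<rho>. card (stw D \<rho>)"] by blast
  have \<rho>0ok: "okw (F N) \<rho>0" and \<rho>0eq: "stw (F N) \<rho>0 = F N" using \<rho>0(1) unfolding GL_def by auto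
  define A where "A = stw D \<rho>0"
  have finA: "finite A" unfolding A_def D_def using finite_stw finV by blast
  have FA: "F N \<subseteq> A" using stw_mono[OF FD, of \<rho>0] \<rho>0eq unfolding A_def by simp
  have FNC: "F N \<in> C" using FC[of N] unfolding F_def by simp
  define G where "G = ss_src (w (- int n))"
  define Z where "Z = ss_src (w (int n + 1))"
  define lam where "lam = wd (ss_lab \<circ> w) (- int n) (2 * n + 1)"
  have wpath: "okw G (wd (ss_lab \<circ> w) (- int n) m) \<and> stw G (wd (ss_lab \<circ> w) (- int n) m) = ss_src (w (- int n + int m))" for m
    unfolding G_def by (rule sp_path[OF w H2_sub])
  have lam_ok: "okw G lam" "stw G lam = Z"
    using wpath[of "2 * n + 1"] unfolding lam_def Z_def by (simp_all add: algebra_simps)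
  obtain \<alpha> where \<alpha>: "okw (F N) \<alpha>" "stw (F N) \<alpha> = G" using Cpath[OF FNC wC[of "- int n"]] unfolding G_def by blast
  have FkC: "F (N - int k0) \<in> C" using FC[of "N - int k0"] unfolding F_def by simp
  obtain \<beta> where \<beta>: "okw Z \<beta>" "stw Z \<beta> = F (N - int k0)" using Cpath[OF wC[of "int n + 1"] FkC] unfolding Z_def by blast
  have vpath: "okw (F (N - int k0)) v" "stw (F (N - int k0)) v = F N"
    using sp_path[OF beta_es_se[OF y] order_refl, of "N - int k0" k0]
    unfolding beta_simps F_def v_def by simp_all
  define \<sigma> where "\<sigma> = \<alpha> @ lam @ \<beta> @ v"
  have \<sigma>ok: "okw (F N) \<sigma>" and \<sigma>eq: "stw (F N) \<sigma> = F N"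
    using \<alpha> lam_ok \<beta> vpath unfolding \<sigma>_def okw_append stw_append by simp_all
  have "\<rho>0 @ \<sigma> \<in> GL" using \<rho>0ok \<rho>0eq \<sigma>ok \<sigma>eq by (simp add: GL_def okw_append stw_append)
  then have "card (stw D \<rho>0) \<le> card (stw D (\<rho>0 @ \<sigma>))" using \<rho>0(2) by blast
  then have cardle: "card A \<le> card (stw A \<sigma>)" unfolding A_def stw_append .
  define ws where "ws = \<rho>0 @ \<sigma>"
  define len where "len = length ws"
  define p0 where "p0 = - int n - int (length \<alpha>) - int (length \<rho>0)"
  define p where "p = p0 + int (length \<rho>0)"
  define y' where "y' = (\<lambda>i. if i < p0 then y (i - p0 + N) else if i < p0 + int len then ws ! nat (i - p0)
                              else y (i - p0 - int len + N))"
  have y'_mid: "y' (p0 + int j) = ws ! j" if "j < len" for j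
    using that unfolding y'_def by auto
  have wd_mid: "wd y' (p0 + int j) m = take m (drop j ws)" if "j + m \<le> len" for j m
  proof (rule nth_equalityI)
    show "length (wd y' (p0 + int j) m) = length (take m (drop j ws))" using that len_def by simp
    fix i assume "i < length (wd y' (p0 + int j) m)"
    then have i: "i < m" by simp
    have "wd y' (p0 + int j) m ! i = y' (p0 + int (j + i))" using i by (simp add: algebra_simps)
    also have "\<dots> = ws ! (j + i)" using i that by (intro y'_mid) simp
    also have "\<dots> = take m (drop j ws) ! i" using i that len_def by simp
    finally show "wd y' (p0 + int j) m ! i = take m (drop j ws) ! i" .
  qed
  have wd_left: "wd y' (p0 - int k0) k0 = v"
    unfolding v_def by (rule nth_equalityI) (auto simp: y'_def algebra_simps)
  have wd_rho: "wd y' p0 (length \<rho>0) = \<rho>0"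
    using wd_mid[of 0 "length \<rho>0"] unfolding len_def ws_def by simp
  have wd_sig: "wd y' p (length \<sigma>) = \<sigma>"
    using wd_mid[of "length \<rho>0" "length \<sigma>"] unfolding len_def ws_def p_def by simp
  have y'_right: "y' i = y (i - (p0 + int len) + N)" if "i \<ge> p0 + int len" for i
    using that unfolding y'_def by (auto simp: algebra_simps)
  have p_len: "p + int (length \<sigma>) = p0 + int len" unfolding p_def len_def ws_def by simp
  have okws: "okw (F N) ws" using \<rho>0ok \<rho>0eq \<sigma>ok unfolding ws_def okw_append by simp
  have wseq: "stw (F N) ws = F N" using \<rho>0eq \<sigma>eq unfolding ws_def stw_append by simp
  have C1: "\<exists>K. K \<in> edge_shift E s t \<and> L \<circ> K = y' \<and> s (K p) = f" if f: "f \<in> F N" for f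
  proof -
    obtain f' where f': "f' \<in> F N" "f \<in> stw {f'} \<rho>0"
      using f \<rho>0eq stw_mem[of f "F N" \<rho>0] by auto
    obtain h z where hz: "walk f' h len z" "\<forall>m<len. L (h m) = ws ! m" "z \<in> stw {f'} ws"
      using okw_walk[OF okws f'(1)] unfolding len_def by blast
    have zF: "z \<in> F N" using hz(3) stw_mono[of "{f'}" "F N" ws] f'(1) wseq by auto
    obtain k1 where k1: "k1 \<in> edge_shift E s t" "L \<circ> k1 = y" "f' = s (k1 N)"
      using f'(1) unfolding F_def bF_mem by blast
    obtain k2 where k2: "k2 \<in> edge_shift E s t" "L \<circ> k2 = y" "z = s (k2 N)"
      using zF unfolding F_def bF_mem by blast
    define K where "K = (\<lambda>i. if i < p0 then k1 (i - p0 + N) else if i < p0 + int len then h (nat (i - p0))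
                              else k2 (i - p0 - int len + N))"
    have l3: "t (k1 (N - 1)) = f'" using k1(1,3) unfolding es_iff by (metis diff_add_cancel)
    have KE: "K \<in> edge_shift E s t" unfolding K_def
      by (rule glue[where a = N and b = N and x = f' and z = z]) (use k1 k2 hz l3 in \<open>auto simp: es_iff\<close>)
    have KL: "L \<circ> K = y'"
    proof
      fix i
      show "(L \<circ> K) i = y' i"
      proof (cases "i < p0")
        case True then show ?thesis using k1(2) unfolding K_def y'_def by auto
      next
        case False
        show ?thesis
        proof (cases "i < p0 + int len")
          case True
          then have "nat (i - p0) < len" using False by auto
          then show ?thesis using False True hz(2) unfolding K_def y'_def by auto
        next
          case F2: False
          then show ?thesis using False k2(2) unfolding K_def y'_def by auto
        qed
      qed
    qed
    have sKp0: "s (K p0) = f'"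
    proof (cases "len = 0")
      case True
      then show ?thesis using hz(1) k2(3) unfolding walk_def K_def by simp
    next
      case False
      then show ?thesis using hz(1) unfolding walk_def K_def by simp
    qed
    have "s (K (p0 + int (length \<rho>0))) \<in> stw {s (K p0)} (wd (L \<circ> K) p0 (length \<rho>0))"
      by (rule es_path[OF KE])
    then have "s (K p) \<in> stw {f'} \<rho>0" using sKp0 KL wd_rho unfolding p_def by simp
    then have "s (K p) = f" using f'(2) stw_single_atmost[of "{f'}" \<rho>0] by auto
    then show ?thesis using KE KL by blast
  qed
  have C2: "x \<in> F N" if x: "x \<in> beta_F E s t L y' p" for x
  proof -
    obtain K where K: "K \<in> edge_shift E s t" "L \<circ> K = y'" "x = s (K p)"
      using x unfolding bF_mem by blast
    have sV: "s (K i) \<in> V" for i using K(1) stV unfolding es_iff by blast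
    have "s (K (p0 - int k0 + int k0)) \<in> stw {s (K (p0 - int k0))} (wd (L \<circ> K) (p0 - int k0) k0)"
      by (rule es_path[OF K(1)])
    then have "s (K p0) \<in> stw {s (K (p0 - int k0))} v" using K(2) wd_left by simp
    then have x'D: "s (K p0) \<in> D" unfolding D_def using stw_mono[of "{s (K (p0 - int k0))}" V v] sV by blast
    have "s (K (p0 + int (length \<rho>0))) \<in> stw {s (K p0)} (wd (L \<circ> K) p0 (length \<rho>0))"
      by (rule es_path[OF K(1)])
    then have "x \<in> stw {s (K p0)} \<rho>0" using K(2,3) wd_rho unfolding p_def by simp
    then have xA: "x \<in> A" unfolding A_def using stw_mono[of "{s (K p0)}" D \<rho>0] x'D by blast
    define q where "q = s (K (p0 + int len))"
    have "s (K (p + int (length \<sigma>))) \<in> stw {s (K p)} (wd (L \<circ> K) p (length \<sigma>))"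
      by (rule es_path[OF K(1)])
    then have qx: "q \<in> stw {x} \<sigma>" using K(2,3) wd_sig p_len unfolding q_def by simp
    have "stw {x} \<sigma> = stw (stw {x} (\<alpha> @ lam @ \<beta>)) v" unfolding \<sigma>_def stw_append by simp
    also have "\<dots> \<subseteq> D" unfolding D_def
      by (rule stw_mono, rule stw_V) (use sV K(3) in auto)
    finally have qD: "q \<in> D" using qx by blast
    have "\<forall>i\<ge>p0 + int len. L (K i) = y (i - (p0 + int len) + N)"
      using y'_right K(2) by (metis comp_apply)
    then have qF: "q \<in> F N" using KD[OF K(1)] qD unfolding q_def by blast
    obtain f where f: "f \<in> F N" "q \<in> stw {f} \<sigma>"
      using qF \<sigma>eq stw_mem[of q "F N" \<sigma>] by auto
    show ?thesis
    proof (rule ccontr)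
      assume "x \<notin> F N"
      then have ne: "x \<noteq> f" using f(1) by blast
      have am: "\<forall>a\<in>stw {x} \<sigma>. \<forall>b\<in>stw {x} \<sigma>. a = b" by (rule stw_single_atmost) simp
      have "stw {x} \<sigma> \<subseteq> stw {f} \<sigma>"
      proof
        fix r assume "r \<in> stw {x} \<sigma>"
        then have "r = q" using am qx by blast
        then show "r \<in> stw {f} \<sigma>" using f(2) by simp
      qed
      then have "card (stw A \<sigma>) < card A" using card_stw_less[OF finA xA _ ne] f(1) FA by blast
      then show False using cardle by simp
    qed
  qed
  have bFp: "beta_F E s t L y' p = F N"
  proof
    show "beta_F E s t L y' p \<subseteq> F N" using C2 by blast
    show "F N \<subseteq> beta_F E s t L y' p"
    proof
      fix f assume "f \<in> F N"
      then obtain K where "K \<in> edge_shift E s t" "L \<circ> K = y'" "s (K p) = f" using C1 by blast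
      then show "f \<in> beta_F E s t L y' p" unfolding bF_mem by metis
    qed
  qed
  obtain f0 where "f0 \<in> F N" using bF_ne[OF y] unfolding F_def by blast
  then obtain K0 where "K0 \<in> edge_shift E s t" "L \<circ> K0 = y'" using C1 by blast
  then have y'Y: "y' \<in> label_shift E s t L" unfolding label_shift_def by blast
  have lenws: "len = length \<rho>0 + length \<alpha> + (2 * n + 1) + length \<beta> + length v"
    unfolding len_def ws_def \<sigma>_def lam_def by simp
  have mainF: "beta_F E s t L y' (- int n + int j) = ss_src (w (- int n + int j))" if j: "j \<le> 2 * n + 1" for j
  proof -
    have eqi: "- int n + int j = p + int (length \<alpha> + j)" unfolding p_def p0_def by simp
    have "wd y' p (length \<alpha> + j) = take (length \<alpha> + j) (drop (length \<rho>0) ws)"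
      unfolding p_def using j lenws by (intro wd_mid) simp
    also have "\<dots> = \<alpha> @ take j lam" unfolding ws_def \<sigma>_def using j by (simp add: lam_def)
    finally have wdeq: "wd y' p (length \<alpha> + j) = \<alpha> @ take j lam" .
    have tk: "take j lam = wd (ss_lab \<circ> w) (- int n) j" unfolding lam_def wd_def
      using j by (simp add: take_map del: upt_Suc)
    have "beta_F E s t L y' (- int n + int j) = stw (F N) (\<alpha> @ take j lam)"
      unfolding eqi bF_iter bFp wdeq ..
    also have "\<dots> = stw G (wd (ss_lab \<circ> w) (- int n) j)" unfolding stw_append \<alpha>(2) tk ..
    also have "\<dots> = ss_src (w (- int n + int j))" using wpath[of j] by simp
    finally show ?thesis .
  qed
  have mainL: "y' (- int n + int j) = ss_lab (w (- int n + int j))" if j: "j < 2 * n + 1" for j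
  proof -
    have eqi: "- int n + int j = p0 + int (length \<rho>0 + length \<alpha> + j)" unfolding p0_def by simp
    have "y' (- int n + int j) = ws ! (length \<rho>0 + length \<alpha> + j)"
      unfolding eqi using j lenws by (intro y'_mid) simp
    also have "\<dots> = lam ! j" unfolding ws_def \<sigma>_def using j
      by (simp add: nth_append lam_def)
    also have "\<dots> = ss_lab (w (- int n + int j))" unfolding lam_def using j by simp
    finally show ?thesis .
  qed
  show ?thesis
  proof (intro bexI[OF _ y'Y] allI impI)
    fix i assume i: "- int n \<le> i \<and> i \<le> int n"
    define j where "j = nat (i + int n)"
    have ij: "i = - int n + int j" "j < 2 * n + 1" using i unfolding j_def by auto
    have i1: "i + 1 = - int n + int (Suc j)" using ij by simp
    have wt: "ss_tgt (w i) = ss_src (w (i + 1))" using w unfolding edge_shift_def by auto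
    have "beta E s t L y' i = (ss_src (w i), ss_lab (w i), ss_src (w (i + 1)))"
    proof -
      have b1: "beta_F E s t L y' i = ss_src (w i)" unfolding ij(1) by (rule mainF) (use ij in simp)
      have b2: "beta_F E s t L y' (i + 1) = ss_src (w (i + 1))" unfolding i1 by (rule mainF) (use ij in simp)
      have b3: "y' i = ss_lab (w i)" unfolding ij(1) by (rule mainL) (use ij in simp)
      show ?thesis unfolding beta_def b1 b2 b3 ..
    qed
    also have "\<dots> = w i" using wt unfolding ss_src_def ss_lab_def ss_tgt_def
      by (metis prod.collapse)
    finally show "beta E s t L y' i = w i" .
  qed
qed

end


theorem lemma4p4:
  fixes V :: "'v set" and E :: "'e set" and s t :: "'e \<Rightarrow> 'v" and L :: "'e \<Rightarrow> 'a"
    and C :: "'v set set" and y :: "int \<Rightarrow> 'a"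
  assumes "finite_graph_no_sinks_sources V E s t"
    and "right_resolving E s L"
    and "is_component (H2_edges V E s t L) ss_src ss_tgt C"
    and "y \<in> label_shift E s t L"
    and "backward_asymptotic (beta E s t L y) (component_shift (H2_edges V E s t L) ss_src ss_tgt C)"
  shows "component_shift (H2_edges V E s t L) ss_src ss_tgt C
           \<subseteq> shift_closure (H2_edges V E s t L) ss_src ss_tgt (beta E s t L ` label_shift E s t L)"
proof -
  interpret rrg V E s t L by (rule rrg.intro) (fact assms(1), fact assms(2))
  let ?R = "edge_rel (H2_edges V E s t L) ss_src ss_tgt"
  obtain u N where u: "u \<in> component_shift (H2_edges V E s t L) ss_src ss_tgt C"
    "\<forall>i\<le>N. beta E s t L y i = u i"
    using assms(5) unfolding backward_asymptotic_def by blast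
  obtain v0 where v0: "C = {w. recurrent (H2_edges V E s t L) ss_src ss_tgt w \<and> (v0, w) \<in> ?R\<^sup>* \<and> (w, v0) \<in> ?R\<^sup>*}"
    using assms(3) unfolding is_component_def by blast
  have Cpath: "\<exists>w. okw a w \<and> stw a w = b" if "a \<in> C" "b \<in> C" for a b
  proof -
    have "(a, v0) \<in> ?R\<^sup>*" "(v0, b) \<in> ?R\<^sup>*" using that v0 by auto
    then have "(a, b) \<in> ?R\<^sup>*" by (rule rtrancl_trans)
    then show ?thesis by (rule rt_path)
  qed
  have csE: "x \<in> component_shift (H2_edges V E s t L) ss_src ss_tgt C \<Longrightarrow>
      x \<in> edge_shift (H2_edges V E s t L) ss_src ss_tgt \<and> (\<forall>i. ss_src (x i) \<in> C)" for x
    unfolding component_shift_def edge_shift_def by auto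
  have FC: "beta_F E s t L y i \<in> C" if "i \<le> N" for i
    using csE[OF u(1)] u(2) that beta_simps(1)[of y i] by metis
  show ?thesis
  proof
    fix w assume w: "w \<in> component_shift (H2_edges V E s t L) ss_src ss_tgt C"
    have wE: "w \<in> edge_shift (H2_edges V E s t L) ss_src ss_tgt" and wC: "\<And>i. ss_src (w i) \<in> C"
      using csE[OF w] by auto
    show "w \<in> shift_closure (H2_edges V E s t L) ss_src ss_tgt (beta E s t L ` label_shift E s t L)"
    proof (rule closure_reduce[OF wE])
      show "beta E s t L ` label_shift E s t L \<subseteq> edge_shift (H2_edges V E s t L) ss_src ss_tgt"
        using beta_H2 by blast
    next
      fix n :: nat
      obtain y' where "y' \<in> label_shift E s t L" "\<forall>i. - int n \<le> i \<and> i \<le> int n \<longrightarrow> beta E s t L y' i = w i"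
        using core[where n=n and N=N and C=C and w=w, OF assms(4) Cpath FC wE wC] by blast
      then show "\<exists>z\<in>beta E s t L ` label_shift E s t L. \<forall>i. - int n \<le> i \<and> i \<le> int n \<longrightarrow> z i = w i"
        by blast
    qed
  qed
qed


end
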